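(* Let $N\ge2$, $z=(z_1,\dots,z_N)\in\mathcal P_d^N$, and let $x=(x^i_j)_{1\le j\le i\le N}$ be any critical point of $\Phi^N$ restricted to the set of height-$N$ triangular arrays with $N$-th row equal to $z$ (viewed as a function of the free variables $x^i_j$, $1\le j\le i\le N-1$). Set $p_i=|x^i_1\cdots x^i_i|$. Then $$p_1=p_2^{1/2}=\dots=p_{N-1}^{1/(N-1)}=p_N^{1/N}=|z_1\cdots z_N|^{1/N}.$$
   Context: $\mathcal P_d$: $d\times d$ real symmetric positive definite matrices (an open subset of the space of symmetric matrices); $|\cdot|$ determinant. For a height-$N$ triangular array $x=(x^i_j)_{1\le j\le i\le N}$ with $x^i_j\in\mathcal P_d$, $\Phi^N(x)=\sum_{i=1}^{N-1}\sum_{j=1}^i\big(\operatorname{tr}[x^{i+1}_{j+1}(x^i_j)^{-1}]+\operatorname{tr}[x^i_j(x^{i+1}_j)^{-1}]\big)$. *)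

theory Defs
  imports "HOL-Analysis.Analysis"
begin

type_synonym 'd sqmat = "real^'d^'d"

definition posdef :: "'d::finite sqmat \<Rightarrow> bool" where
  "posdef A \<longleftrightarrow> transpose A = A \<and> (\<forall>v. v \<noteq> 0 \<longrightarrow> v \<bullet> (A *v v) > 0)"

definition symm :: "'d::finite sqmat \<Rightarrow> bool" where
  "symm A \<longleftrightarrow> transpose A = A"

text \<open>Triangular arrays are functions x i j, meaningful for 1 <= j <= i <= N.\<close>

definition Phi :: "nat \<Rightarrow> (nat \<Rightarrow> nat \<Rightarrow> 'd::finite sqmat) \<Rightarrow> real" where
  "Phi N x = (\<Sum>i=1..N-1. \<Sum>j=1..i.
      trace (x (i+1) (j+1) ** matrix_inv (x i j)) + trace (x i j ** matrix_inv (x (i+1) j)))"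

fun mprod :: "(nat \<Rightarrow> 'd::finite sqmat) \<Rightarrow> nat \<Rightarrow> 'd sqmat" where
  "mprod a 0 = mat 1"
| "mprod a (Suc k) = mprod a k ** a (Suc k)"

definition array_with_row :: "nat \<Rightarrow> (nat \<Rightarrow> 'd::finite sqmat) \<Rightarrow> (nat \<Rightarrow> nat \<Rightarrow> 'd sqmat) \<Rightarrow> bool" where
  "array_with_row N z x \<longleftrightarrow>
     (\<forall>i j. 1 \<le> j \<and> j \<le> i \<and> i \<le> N \<longrightarrow> posdef (x i j)) \<and>
     (\<forall>j. 1 \<le> j \<and> j \<le> N \<longrightarrow> x N j = z j)"

text \<open>Critical point of Phi^N in the free variables x^i_j, 1 <= j <= i <= N-1, each ranging
  over the open set P_d of the space of symmetric matrices: the derivative of Phi^N at x vanishes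
  in every direction H (a family of symmetric matrices at the free positions).\<close>
definition critical_point :: "nat \<Rightarrow> (nat \<Rightarrow> nat \<Rightarrow> 'd::finite sqmat) \<Rightarrow> bool" where
  "critical_point N x \<longleftrightarrow>
     (\<forall>H :: nat \<Rightarrow> nat \<Rightarrow> 'd sqmat.
        (\<forall>i j. 1 \<le> j \<and> j \<le> i \<and> i \<le> N - 1 \<longrightarrow> symm (H i j)) \<longrightarrow>
        ((\<lambda>t. Phi N (\<lambda>i j. if 1 \<le> j \<and> j \<le> i \<and> i \<le> N - 1 then x i j + t *\<^sub>R H i j else x i j))
           has_real_derivative 0) (at 0))"

end

theory Submission
  imports Defs
begin


lemma minv:
  fixes A :: "real^'n::finite^'n"
  assumes "invertible A"
  shows "A ** matrix_inv A = mat 1" "matrix_inv A ** A = mat 1"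
  using someI_ex[OF assms[unfolded invertible_def]] unfolding matrix_inv_def by auto

lemma minv_unique:
  fixes A B :: "real^'n::finite^'n"
  assumes "A ** B = mat 1"
  shows "matrix_inv A = B"
proof -
  have i: "invertible A" using assms invertible_right_inverse by blast
  have "matrix_inv A = matrix_inv A ** (A ** B)" using assms by simp
  also have "\<dots> = B" by (simp add: matrix_mul_assoc minv(2)[OF i])
  finally show ?thesis .
qed

lemma det_minv:
  fixes A :: "real^'n::finite^'n"
  assumes "invertible A"
  shows "det (matrix_inv A) = 1 / det A"
proof -
  have "det A * det (matrix_inv A) = 1" using minv[OF assms] det_mul[of A "matrix_inv A"] by simp
  then show ?thesis by (metis eq_divide_eq_1 mult.commute mult_zero_left zero_neq_one nonzero_eq_divide_eq)
qed

lemma minv_entry: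
  fixes A :: "real^'n::finite^'n"
  assumes d: "det A \<noteq> 0"
  shows "matrix_inv A $ i $ k = det (\<chi> r c. if c = i then (if r = k then 1 else 0) else A $ r $ c) / det A"
proof -
  have inv: "invertible A" using d invertible_det_nz by blast
  let ?B = "matrix_inv A"
  have "A *v (?B *v axis k 1) = axis k 1"
    by (simp add: matrix_vector_mul_assoc minv(1)[OF inv])
  then have "?B *v axis k 1 = (\<chi> k'. det(\<chi> i j. if j=k' then (axis k 1::real^'n)$i else A$i$j) / det A)"
    using cramer[OF d] by blast
  then have "(?B *v axis k 1) $ i = det(\<chi> r c. if c=i then (axis k 1::real^'n)$r else A$r$c) / det A"
    by simp
  moreover have "(?B *v axis k 1) $ i = ?B $ i $ k"
    by (simp add: matrix_vector_mult_basis column_def)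
  moreover have ax: "\<And>r. (axis k 1 :: real^'n) $ r = (if r = k then 1 else 0)" by (simp add: axis_def)
  ultimately show ?thesis by (simp only: ax)
qed

lemma minv_transpose:
  fixes A :: "real^'n::finite^'n"
  assumes "invertible A"
  shows "transpose (matrix_inv A) = matrix_inv (transpose A)"
proof -
  have "transpose A ** transpose (matrix_inv A) = mat 1"
    by (metis matrix_transpose_mul minv(2)[OF assms] transpose_mat)
  then show ?thesis using minv_unique by metis
qed

lemma det_tendsto:
  fixes M :: "'a \<Rightarrow> real^'n::finite^'n"
  assumes "\<And>i j. ((\<lambda>t. M t $ i $ j) \<longlongrightarrow> L $ i $ j) F"
  shows "((\<lambda>t. det (M t)) \<longlongrightarrow> det L) F"
  unfolding det_def
  by (intro tendsto_intros assms)

lemma det_mprod: "det (mprod a k) = (\<Prod>j=1..k. det (a j))"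
  by (induction k) (auto simp: det_mul det_I)


lemma matrix_add_rdistrib': "((A::real^'n::finite^'m) + B) ** (C::real^'p^'n) = A ** C + B ** C"
  by (simp add: matrix_matrix_mult_def vec_eq_iff sum.distrib[symmetric] distrib_right)
lemma matrix_sub_rdistrib': "((A::real^'n::finite^'m) - B) ** (C::real^'p^'n) = A ** C - B ** C"
  by (simp add: matrix_matrix_mult_def vec_eq_iff sum_subtractf[symmetric] left_diff_distrib)
lemma matrix_sub_ldistrib': "(A::real^'n::finite^'m) ** ((B::real^'p^'n) - C) = A ** B - A ** C"
  by (simp add: matrix_matrix_mult_def vec_eq_iff sum_subtractf[symmetric] right_diff_distrib)
lemma trace_scaleR: "trace (c *\<^sub>R (A::real^'n::finite^'n)) = c * trace A"
  by (simp add: trace_def sum_distrib_left)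
lemma trace_mult_sum: "trace ((X::real^'n::finite^'n) ** M) = (\<Sum>i\<in>UNIV. \<Sum>k\<in>UNIV. X$i$k * M$k$i)"
  by (simp add: trace_def matrix_matrix_mult_def)

lemma minv_tendsto:
  fixes C D :: "real^'n::finite^'n"
  assumes d: "det C \<noteq> 0"
  shows "((\<lambda>t. matrix_inv (C + t *\<^sub>R D) $ i $ k) \<longlongrightarrow> matrix_inv C $ i $ k) (at 0)"
proof -
  have dt: "((\<lambda>t. det (C + t *\<^sub>R D)) \<longlongrightarrow> det C) (at (0::real))"
  proof (rule det_tendsto)
    fix i j show "((\<lambda>t. (C + t *\<^sub>R D) $ i $ j) \<longlongrightarrow> C $ i $ j) (at (0::real))"
      by (auto intro!: tendsto_eq_intros)
  qed
  have ev: "eventually (\<lambda>t. det (C + t *\<^sub>R D) \<noteq> 0) (at (0::real))"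
    using tendsto_imp_eventually_ne[OF dt d] .
  let ?N = "\<lambda>t::real. det (\<chi> r c. if c = i then (if r = k then 1 else 0) else (C + t *\<^sub>R D) $ r $ c)"
  have nt: "(?N \<longlongrightarrow> det (\<chi> r c. if c = i then (if r = k then 1 else 0) else C $ r $ c)) (at 0)"
  proof (rule det_tendsto)
    fix r c show "((\<lambda>t. (\<chi> r c. if c = i then (if r = k then 1 else 0) else (C + t *\<^sub>R D) $ r $ c) $ r $ c) \<longlongrightarrow>
       (\<chi> r c. if c = i then (if r = k then 1 else 0) else C $ r $ c) $ r $ c) (at (0::real))"
      by (cases "c = i") (auto intro!: tendsto_eq_intros)
  qed
  have "((\<lambda>t. ?N t / det (C + t *\<^sub>R D)) \<longlongrightarrow> matrix_inv C $ i $ k) (at 0)"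
    unfolding minv_entry[OF d] by (intro tendsto_divide nt dt d)
  moreover have "eventually (\<lambda>t. ?N t / det (C + t *\<^sub>R D) = matrix_inv (C + t *\<^sub>R D) $ i $ k) (at (0::real))"
    using ev by eventually_elim (simp add: minv_entry)
  ultimately show ?thesis by (rule Lim_transform_eventually)
qed

lemma trace_deriv:
  fixes A B C D :: "real^'n::finite^'n"
  assumes d: "det C \<noteq> 0"
  shows "((\<lambda>t. trace ((A + t *\<^sub>R B) ** matrix_inv (C + t *\<^sub>R D))) has_real_derivative
     (trace (B ** matrix_inv C) - trace (A ** matrix_inv C ** D ** matrix_inv C))) (at 0)"
proof -
  let ?M = "\<lambda>t. matrix_inv (C + t *\<^sub>R D)"
  let ?Z = "matrix_inv C"
  have dt: "((\<lambda>t. det (C + t *\<^sub>R D)) \<longlongrightarrow> det C) (at (0::real))"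
  proof (rule det_tendsto)
    fix i j show "((\<lambda>t. (C + t *\<^sub>R D) $ i $ j) \<longlongrightarrow> C $ i $ j) (at (0::real))"
      by (auto intro!: tendsto_eq_intros)
  qed
  have ev: "eventually (\<lambda>t. det (C + t *\<^sub>R D) \<noteq> 0 \<and> t \<noteq> 0) (at (0::real))"
    by (intro eventually_conj tendsto_imp_eventually_ne[OF dt d]) (simp add: eventually_at_filter)
  have mt: "\<And>i k. ((\<lambda>t. ?M t $ i $ k) \<longlongrightarrow> ?Z $ i $ k) (at 0)"
    using minv_tendsto[OF d] by blast
  have lim: "((\<lambda>t. trace (B ** ?M t) - trace (A ** ?M t ** D ** ?Z)) \<longlongrightarrow>
      (trace (B ** ?Z) - trace (A ** ?Z ** D ** ?Z))) (at 0)"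
  proof -
    have c: "\<And>t. trace (A ** ?M t ** D ** ?Z) = trace ((D ** ?Z ** A) ** ?M t)"
      by (metis matrix_mul_assoc trace_mul_sym)
    have c0: "trace (A ** ?Z ** D ** ?Z) = trace ((D ** ?Z ** A) ** ?Z)"
      by (metis matrix_mul_assoc trace_mul_sym)
    show ?thesis unfolding c c0 unfolding trace_mult_sum by (intro tendsto_diff tendsto_sum tendsto_mult tendsto_const mt)
  qed
  have eq: "(trace ((A + h *\<^sub>R B) ** ?M h) - trace ((A + 0 *\<^sub>R B) ** ?M 0)) / h
      = trace (B ** ?M h) - trace (A ** ?M h ** D ** ?Z)"
    if h: "det (C + h *\<^sub>R D) \<noteq> 0 \<and> h \<noteq> 0" for h
  proof -
    have i1: "invertible (C + h *\<^sub>R D)" using h invertible_det_nz by blast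
    have i0: "invertible C" using d invertible_det_nz by blast
    have "?M h = ?M h ** ((C + h *\<^sub>R D) - h *\<^sub>R D) ** ?Z"
      by (simp add: minv(1)[OF i0] matrix_mul_assoc[symmetric])
    also have "\<dots> = (?M h ** (C + h *\<^sub>R D) - ?M h ** (h *\<^sub>R D)) ** ?Z"
      by (simp only: matrix_sub_ldistrib')
    also have "\<dots> = (mat 1 - h *\<^sub>R (?M h ** D)) ** ?Z"
      by (simp only: minv(2)[OF i1] matrix_scalar_ac scalar_matrix_assoc[symmetric])
    also have "\<dots> = ?Z - h *\<^sub>R (?M h ** D ** ?Z)"
      by (simp only: matrix_sub_rdistrib' matrix_mul_lid scalar_matrix_assoc)
    finally have mh: "?M h = ?Z - h *\<^sub>R (?M h ** D ** ?Z)" .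
    have "trace ((A + h *\<^sub>R B) ** ?M h) = trace (A ** ?M h) + h * trace (B ** ?M h)"
      by (simp add: matrix_add_rdistrib' trace_add trace_scaleR scalar_matrix_assoc[symmetric])
    also have "trace (A ** ?M h) = trace (A ** ?Z) - h * trace (A ** ?M h ** D ** ?Z)"
      by (subst mh) (simp add: matrix_sub_ldistrib' trace_sub matrix_scalar_ac trace_scaleR
          scalar_matrix_assoc[symmetric] matrix_mul_assoc)
    finally show ?thesis using h by (simp add: field_simps)
  qed
  have "((\<lambda>h. (trace ((A + (0 + h) *\<^sub>R B) ** ?M (0 + h)) - trace ((A + 0 *\<^sub>R B) ** ?M 0)) / h) \<longlongrightarrow>
      (trace (B ** ?Z) - trace (A ** ?Z ** D ** ?Z))) (at 0)"
  proof -
    have "eventually (\<lambda>h. trace (B ** ?M h) - trace (A ** ?M h ** D ** ?Z) =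
       (trace ((A + (0 + h) *\<^sub>R B) ** ?M (0 + h)) - trace ((A + 0 *\<^sub>R B) ** ?M 0)) / h) (at 0)"
      using ev by eventually_elim (metis add_0_left eq)
    then show ?thesis using lim by (intro Lim_transform_eventually[OF lim]) auto
  qed
  then show ?thesis unfolding DERIV_def by simp
qed


lemma quad_pos_det_nz:
  fixes P :: "real^'n::finite^'n"
  assumes "\<forall>v. v \<noteq> 0 \<longrightarrow> v \<bullet> (P *v v) > 0"
  shows "det P \<noteq> 0"
proof
  assume "det P = 0"
  then have "\<not> inj ((*v) P)"
    using invertible_det_nz[of P] invertible_left_inverse matrix_left_invertible_injective by metis
  then obtain u w where "u \<noteq> w" "P *v u = P *v w" unfolding inj_def by blast
  then have "P *v (u - w) = 0" "u - w \<noteq> 0" by (simp_all add: matrix_vector_mult_diff_distrib)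
  moreover have "(u - w) \<bullet> (P *v (u - w)) > 0" using assms calculation(2) by blast
  ultimately show False by simp
qed

lemma posdef_det_nz: "posdef (P::real^'n::finite^'n) \<Longrightarrow> det P \<noteq> 0"
  unfolding posdef_def using quad_pos_det_nz by blast

lemma posdef_invertible: "posdef (P::real^'n::finite^'n) \<Longrightarrow> invertible P"
  using posdef_det_nz invertible_det_nz by blast

lemma posdef_add: "posdef (P::real^'n::finite^'n) \<Longrightarrow> posdef Q \<Longrightarrow> posdef (P + Q)"
proof -
  assume p: "posdef P" and q: "posdef Q"
  have "transpose (P + Q) = transpose P + transpose Q" by (simp add: transpose_def vec_eq_iff)
  moreover have "\<forall>v. v \<noteq> 0 \<longrightarrow> v \<bullet> ((P + Q) *v v) > 0"
    using p q unfolding posdef_def by (simp add: matrix_vector_mult_add_rdistrib inner_add_right add_pos_pos)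
  ultimately show ?thesis using p q unfolding posdef_def by simp
qed

lemma posdef_det_pos:
  fixes A :: "real^'n::finite^'n"
  assumes "posdef A"
  shows "det A > 0"
proof (rule ccontr)
  assume "\<not> det A > 0"
  let ?f = "\<lambda>s::real. det ((1 - s) *\<^sub>R mat 1 + s *\<^sub>R A)"
  have c: "continuous_on {0..1} ?f"
    unfolding det_def by (simp, intro continuous_intros)
  have "?f 1 \<le> 0" "0 \<le> ?f 0" using \<open>\<not> det A > 0\<close> by (simp_all add: det_I)
  then obtain s where s: "0 \<le> s" "s \<le> 1" "?f s = 0" using IVT2'[OF _ _ _ c, of 0] by auto
  have "\<forall>v. v \<noteq> 0 \<longrightarrow> v \<bullet> (((1 - s) *\<^sub>R mat 1 + s *\<^sub>R A) *v v) > 0"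
  proof (intro allI impI)
    fix v :: "real^'n" assume v: "v \<noteq> 0"
    have q: "v \<bullet> (A *v v) > 0" using assms v unfolding posdef_def by blast
    have eqv: "v \<bullet> (((1 - s) *\<^sub>R mat 1 + s *\<^sub>R A) *v v) = (1 - s) * (v \<bullet> v) + s * (v \<bullet> (A *v v))"
      by (simp add: matrix_vector_mult_add_rdistrib inner_add_right scaleR_matrix_vector_assoc[symmetric])
    have "v \<bullet> v > 0" using v by simp
    show "v \<bullet> (((1 - s) *\<^sub>R mat 1 + s *\<^sub>R A) *v v) > 0"
    proof (cases "s = 0")
      case True then show ?thesis using \<open>v \<bullet> v > 0\<close> eqv by simp
    next
      case False
      then have "s * (v \<bullet> (A *v v)) > 0" using s q by simp
      moreover have "(1 - s) * (v \<bullet> v) \<ge> 0" using s \<open>v \<bullet> v > 0\<close> by simp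
      ultimately show ?thesis using eqv by linarith
    qed
  qed
  then show False using quad_pos_det_nz s(3) by blast
qed

lemma posdef_inv_symm:
  assumes "posdef (P::real^'n::finite^'n)"
  shows "transpose (matrix_inv P) = matrix_inv P"
  using minv_transpose[OF posdef_invertible[OF assms]] assms unfolding posdef_def by simp



lemma phi_deriv:
  fixes x K :: "nat \<Rightarrow> nat \<Rightarrow> real^'n::finite^'n"
  assumes dets: "\<And>i j. 1 \<le> j \<Longrightarrow> j \<le> i \<Longrightarrow> i \<le> N \<Longrightarrow> det (x i j) \<noteq> 0"
  shows "((\<lambda>t. Phi N (\<lambda>i j. x i j + t *\<^sub>R K i j)) has_real_derivative
    (\<Sum>i=1..N-1. \<Sum>j=1..i. (trace (K (i+1) (j+1) ** matrix_inv (x i j))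
        - trace (x (i+1) (j+1) ** matrix_inv (x i j) ** K i j ** matrix_inv (x i j)))
      + (trace (K i j ** matrix_inv (x (i+1) j))
        - trace (x i j ** matrix_inv (x (i+1) j) ** K (i+1) j ** matrix_inv (x (i+1) j))))) (at 0)"
proof -
  have d1: "\<And>i j. i \<in> {1..N-1} \<Longrightarrow> j \<in> {1..i} \<Longrightarrow> det (x i j) \<noteq> 0 \<and> det (x (i+1) j) \<noteq> 0"
  proof -
    fix i j assume "i \<in> {1..N-1}" "j \<in> {1..i}"
    then have "i \<le> N" "i+1 \<le> N" "1 \<le> j" "j \<le> i" "j \<le> i+1" by auto
    then show "det (x i j) \<noteq> 0 \<and> det (x (i+1) j) \<noteq> 0" using dets by blast
  qed
  show ?thesis unfolding Phi_def
    by (intro DERIV_sum DERIV_add trace_deriv) (use d1 in auto)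
qed

lemma collapse:
  fixes M a b :: nat
  shows "(\<Sum>i=1..M. \<Sum>j=1..i. if i = a \<and> j = b then f i j else 0) = (if 1 \<le> b \<and> b \<le> a \<and> 1 \<le> a \<and> a \<le> M then f a b else (0::real))"
proof -
  have "\<And>i. (\<Sum>j=1..i. if i = a \<and> j = b then f i j else 0) = (if i = a then (if 1 \<le> b \<and> b \<le> i then f i b else 0) else 0)"
  proof -
    fix i
    have "(\<Sum>j=1..i. if i = a \<and> j = b then f i j else 0) = (\<Sum>j=1..i. if i = a then (if j = b then f i j else 0) else 0)"
      by (rule sum.cong) auto
    also have "\<dots> = (if i = a then (\<Sum>j=1..i. if j = b then f i j else 0) else 0)" by simp
    also have "(\<Sum>j=1..i. if j = b then f i j else 0) = (if b \<in> {1..i} then f i b else 0)"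
      by (rule sum.delta[OF finite_atLeastAtMost])
    finally show "(\<Sum>j=1..i. if i = a \<and> j = b then f i j else 0) = (if i = a then (if 1 \<le> b \<and> b \<le> i then f i b else 0) else 0)" by simp
  qed
  then show ?thesis by (simp add: sum.delta sum.delta')
qed

lemma trace_zero: "trace (0::real^'n::finite^'n) = 0" by (simp add: trace_def)
lemma tr1: "trace ((if c then E else 0) ** (Y::real^'n::finite^'n)) = (if c then trace (E ** Y) else 0)"
  by (simp add: trace_zero)
lemma tr2: "trace ((Y::real^'n::finite^'n) ** (if c then E else 0) ** W) = (if c then trace (Y ** E ** W) else 0)"
  by (simp add: trace_zero)
lemma transpose_add': "transpose ((A::real^'n::finite^'n) + B) = transpose A + transpose B"
  by (simp add: transpose_def vec_eq_iff)
lemma transpose_diff': "transpose ((A::real^'n::finite^'n) - B) = transpose A - transpose B"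
  by (simp add: transpose_def vec_eq_iff)
lemma transpose_zero': "transpose (0::real^'n::finite^'n) = 0"
  by (simp add: transpose_def vec_eq_iff)

lemma trace_sq_zero:
  fixes E :: "real^'n::finite^'n"
  assumes "transpose E = E" "trace (E ** E) = 0"
  shows "E = 0"
proof -
  have s: "E $ k $ i = E $ i $ k" for i k using assms(1) by (metis transpose_def vec_lambda_beta)
  have "trace (E ** E) = (\<Sum>i\<in>UNIV. \<Sum>k\<in>UNIV. (E $ i $ k)^2)"
    unfolding trace_mult_sum by (simp add: s power2_eq_square)
  then have "(\<Sum>i\<in>UNIV. \<Sum>k\<in>UNIV. (E $ i $ k)^2) = 0" using assms(2) by simp
  then have "\<forall>i\<in>UNIV. (\<Sum>k\<in>UNIV. (E $ i $ k)^2) = 0"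
    by (subst (asm) sum_nonneg_eq_0_iff) (auto intro: sum_nonneg)
  then have "\<forall>i k. (E $ i $ k)^2 = 0" by (simp add: sum_nonneg_eq_0_iff)
  then show ?thesis by (simp add: vec_eq_iff)
qed



lemma crit_E:
  fixes x :: "nat \<Rightarrow> nat \<Rightarrow> real^'n::finite^'n"
  assumes pd: "\<And>i j. 1 \<le> j \<Longrightarrow> j \<le> i \<Longrightarrow> i \<le> N \<Longrightarrow> posdef (x i j)"
    and cp: "critical_point N x"
    and ij: "1 \<le> j0" "j0 \<le> i0" "i0 \<le> N - 1"
  defines "Xi \<equiv> matrix_inv (x i0 j0)"
  defines "P1 \<equiv> (if 2 \<le> j0 then matrix_inv (x (i0-1) (j0-1)) else 0)"
  defines "Y2 \<equiv> (if j0 \<le> i0 - 1 then x (i0-1) j0 else 0)"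
  defines "E \<equiv> P1 + matrix_inv (x (i0+1) j0) - Xi ** (x (i0+1) (j0+1) + Y2) ** Xi"
  shows "E = 0"
proof -
  have dets: "\<And>i j. 1 \<le> j \<Longrightarrow> j \<le> i \<Longrightarrow> i \<le> N \<Longrightarrow> det (x i j) \<noteq> 0"
    using pd posdef_det_nz by blast
  have sym: "\<And>i j. 1 \<le> j \<Longrightarrow> j \<le> i \<Longrightarrow> i \<le> N \<Longrightarrow> transpose (x i j) = x i j"
    using pd unfolding posdef_def by blast
  have isym: "\<And>i j. 1 \<le> j \<Longrightarrow> j \<le> i \<Longrightarrow> i \<le> N \<Longrightarrow> transpose (matrix_inv (x i j)) = matrix_inv (x i j)"
    using pd posdef_inv_symm by blast
  have tXi: "transpose Xi = Xi" unfolding Xi_def using ij by (intro isym) auto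
  have tP1: "transpose P1 = P1" unfolding P1_def using ij by (auto intro: isym simp: transpose_zero')
  have tY2: "transpose Y2 = Y2" unfolding Y2_def using ij by (auto intro: sym simp: transpose_zero')
  have t2: "transpose (matrix_inv (x (Suc i0) j0)) = matrix_inv (x (Suc i0) j0)" using ij by (intro isym) auto
  have t3: "transpose (x (Suc i0) (Suc j0)) = x (Suc i0) (Suc j0)" using ij by (intro sym) auto
  have tE: "transpose E = E"
    unfolding E_def by (simp add: transpose_add' transpose_diff' matrix_transpose_mul tXi tP1 tY2 t2 t3 matrix_mul_assoc)
  define H where "H = (\<lambda>i j. if i = i0 \<and> j = j0 then E else (0::real^'n^'n))"
  have "\<forall>i j. 1 \<le> j \<and> j \<le> i \<and> i \<le> N - 1 \<longrightarrow> symm (H i j)"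
    unfolding H_def symm_def using tE by (simp add: transpose_zero')
  then have d0: "((\<lambda>t. Phi N (\<lambda>i j. if 1 \<le> j \<and> j \<le> i \<and> i \<le> N - 1 then x i j + t *\<^sub>R H i j else x i j))
           has_real_derivative 0) (at 0)"
    using cp unfolding critical_point_def by blast
  have fe: "(\<lambda>i j. if 1 \<le> j \<and> j \<le> i \<and> i \<le> N - 1 then x i j + t *\<^sub>R H i j else x i j) = (\<lambda>i j. x i j + t *\<^sub>R H i j)" for t
    using ij by (intro ext) (auto simp: H_def)
  have d1: "((\<lambda>t. Phi N (\<lambda>i j. x i j + t *\<^sub>R H i j)) has_real_derivative 0) (at 0)"
    using d0 by (simp only: fe)
  note d2 = phi_deriv[where K=H, OF dets]
  have z: "0 = (\<Sum>i=1..N-1. \<Sum>j=1..i. (trace (H (i+1) (j+1) ** matrix_inv (x i j))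
        - trace (x (i+1) (j+1) ** matrix_inv (x i j) ** H i j ** matrix_inv (x i j)))
      + (trace (H i j ** matrix_inv (x (i+1) j))
        - trace (x i j ** matrix_inv (x (i+1) j) ** H (i+1) j ** matrix_inv (x (i+1) j))))"
    using DERIV_unique[OF d1 d2] .
  have sp: "(\<Sum>i=1..N-1. \<Sum>j=1..i. (trace (H (i+1) (j+1) ** matrix_inv (x i j))
        - trace (x (i+1) (j+1) ** matrix_inv (x i j) ** H i j ** matrix_inv (x i j)))
      + (trace (H i j ** matrix_inv (x (i+1) j))
        - trace (x i j ** matrix_inv (x (i+1) j) ** H (i+1) j ** matrix_inv (x (i+1) j))))
    = (\<Sum>i=1..N-1. \<Sum>j=1..i. trace (H (i+1) (j+1) ** matrix_inv (x i j)))
     - (\<Sum>i=1..N-1. \<Sum>j=1..i. trace (x (i+1) (j+1) ** matrix_inv (x i j) ** H i j ** matrix_inv (x i j)))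
     + (\<Sum>i=1..N-1. \<Sum>j=1..i. trace (H i j ** matrix_inv (x (i+1) j)))
     - (\<Sum>i=1..N-1. \<Sum>j=1..i. trace (x i j ** matrix_inv (x (i+1) j) ** H (i+1) j ** matrix_inv (x (i+1) j)))"
    by (simp add: sum.distrib sum_subtractf)
  have S1: "(\<Sum>i=1..N-1. \<Sum>j=1..i. trace (H (i+1) (j+1) ** matrix_inv (x i j))) = trace (E ** P1)"
  proof -
    have "(\<Sum>i=1..N-1. \<Sum>j=1..i. trace (H (i+1) (j+1) ** matrix_inv (x i j)))
       = (\<Sum>i=1..N-1. \<Sum>j=1..i. if i = i0-1 \<and> j = j0-1 then trace (E ** matrix_inv (x i j)) else 0)"
      unfolding H_def tr1 using ij by (intro sum.cong refl; auto)
    also have "\<dots> = (if 1 \<le> j0-1 \<and> j0-1 \<le> i0-1 \<and> 1 \<le> i0-1 \<and> i0-1 \<le> N-1 then trace (E ** matrix_inv (x (i0-1) (j0-1))) else 0)"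
      by (rule collapse)
    also have "\<dots> = trace (E ** P1)" using ij unfolding P1_def by (auto simp: trace_zero)
    finally show ?thesis .
  qed
  have S2: "(\<Sum>i=1..N-1. \<Sum>j=1..i. trace (x (i+1) (j+1) ** matrix_inv (x i j) ** H i j ** matrix_inv (x i j)))
      = trace (x (i0+1) (j0+1) ** Xi ** E ** Xi)"
  proof -
    have "(\<Sum>i=1..N-1. \<Sum>j=1..i. trace (x (i+1) (j+1) ** matrix_inv (x i j) ** H i j ** matrix_inv (x i j)))
       = (\<Sum>i=1..N-1. \<Sum>j=1..i. if i = i0 \<and> j = j0 then trace (x (i+1) (j+1) ** matrix_inv (x i j) ** E ** matrix_inv (x i j)) else 0)"
      unfolding H_def tr2 by (intro sum.cong refl; auto)
    also have "\<dots> = (if 1 \<le> j0 \<and> j0 \<le> i0 \<and> 1 \<le> i0 \<and> i0 \<le> N-1 then trace (x (i0+1) (j0+1) ** matrix_inv (x i0 j0) ** E ** matrix_inv (x i0 j0)) else 0)"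
      by (rule collapse)
    also have "\<dots> = trace (x (i0+1) (j0+1) ** Xi ** E ** Xi)" using ij unfolding Xi_def by auto
    finally show ?thesis .
  qed
  have S3: "(\<Sum>i=1..N-1. \<Sum>j=1..i. trace (H i j ** matrix_inv (x (i+1) j))) = trace (E ** matrix_inv (x (i0+1) j0))"
  proof -
    have "(\<Sum>i=1..N-1. \<Sum>j=1..i. trace (H i j ** matrix_inv (x (i+1) j)))
       = (\<Sum>i=1..N-1. \<Sum>j=1..i. if i = i0 \<and> j = j0 then trace (E ** matrix_inv (x (i+1) j)) else 0)"
      unfolding H_def tr1 by (intro sum.cong refl; auto)
    also have "\<dots> = (if 1 \<le> j0 \<and> j0 \<le> i0 \<and> 1 \<le> i0 \<and> i0 \<le> N-1 then trace (E ** matrix_inv (x (i0+1) j0)) else 0)"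
      by (rule collapse)
    also have "\<dots> = trace (E ** matrix_inv (x (i0+1) j0))" using ij by auto
    finally show ?thesis .
  qed
  have S4: "(\<Sum>i=1..N-1. \<Sum>j=1..i. trace (x i j ** matrix_inv (x (i+1) j) ** H (i+1) j ** matrix_inv (x (i+1) j)))
      = trace (Y2 ** Xi ** E ** Xi)"
  proof -
    have "(\<Sum>i=1..N-1. \<Sum>j=1..i. trace (x i j ** matrix_inv (x (i+1) j) ** H (i+1) j ** matrix_inv (x (i+1) j)))
       = (\<Sum>i=1..N-1. \<Sum>j=1..i. if i = i0-1 \<and> j = j0 then trace (x i j ** matrix_inv (x (i+1) j) ** E ** matrix_inv (x (i+1) j)) else 0)"
      unfolding H_def tr2 using ij by (intro sum.cong refl; auto)
    also have "\<dots> = (if 1 \<le> j0 \<and> j0 \<le> i0-1 \<and> 1 \<le> i0-1 \<and> i0-1 \<le> N-1 then trace (x (i0-1) j0 ** matrix_inv (x (i0-1+1) j0) ** E ** matrix_inv (x (i0-1+1) j0)) else 0)"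
      by (rule collapse)
    also have "\<dots> = trace (Y2 ** Xi ** E ** Xi)" using ij unfolding Xi_def Y2_def by (auto simp: trace_zero)
    finally show ?thesis .
  qed
  have cyc: "\<And>Y. trace (E ** (Xi ** Y ** Xi)) = trace (Y ** Xi ** E ** Xi)"
    by (metis matrix_mul_assoc trace_mul_sym)
  have "E ** E = E ** P1 + E ** matrix_inv (x (i0+1) j0) - E ** (Xi ** x (i0+1) (j0+1) ** Xi) - E ** (Xi ** Y2 ** Xi)"
  proof -
    have "E ** E = E ** (P1 + matrix_inv (x (i0+1) j0) - (Xi ** x (i0+1) (j0+1) ** Xi + Xi ** Y2 ** Xi))"
      using E_def by (simp add: matrix_add_ldistrib matrix_add_rdistrib')
    then show ?thesis by (simp add: matrix_add_ldistrib matrix_sub_ldistrib')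
  qed
  then have "trace (E ** E) = trace (E ** P1) + trace (E ** matrix_inv (x (i0+1) j0))
     - trace (x (i0+1) (j0+1) ** Xi ** E ** Xi) - trace (Y2 ** Xi ** E ** Xi)"
    by (simp add: trace_add trace_sub cyc)
  then have "trace (E ** E) = 0" using z sp S1 S2 S3 S4 by linarith
  then show ?thesis using trace_sq_zero tE by blast
qed


lemma row_det:
  fixes x :: "nat \<Rightarrow> nat \<Rightarrow> real^'n::finite^'n"
  assumes pd: "\<And>i j. 1 \<le> j \<Longrightarrow> j \<le> i \<Longrightarrow> i \<le> N \<Longrightarrow> posdef (x i j)"
    and cp: "critical_point N x"
    and ij: "1 \<le> j0" "j0 \<le> i0" "i0 \<le> N - 1"
  shows "det (x i0 j0)^2 * det ((if 2 \<le> j0 then matrix_inv (x (i0-1) (j0-1)) else 0) + matrix_inv (x (i0+1) j0))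
     = det (x (i0+1) (j0+1) + (if j0 \<le> i0 - 1 then x (i0-1) j0 else 0))"
proof -
  let ?X = "x i0 j0" and ?Xi = "matrix_inv (x i0 j0)"
  let ?L = "(if 2 \<le> j0 then matrix_inv (x (i0-1) (j0-1)) else 0) + matrix_inv (x (i0+1) j0)"
  let ?T = "x (i0+1) (j0+1) + (if j0 \<le> i0 - 1 then x (i0-1) j0 else 0)"
  have "?L - ?Xi ** ?T ** ?Xi = 0" using crit_E[OF pd cp ij] by blast
  then have L: "?L = ?Xi ** ?T ** ?Xi" by simp
  have inv: "invertible ?X" using pd[of j0 i0] ij by (intro posdef_invertible) auto
  have "?X ** ?L ** ?X = (?X ** ?Xi) ** ?T ** (?Xi ** ?X)" unfolding L by (simp add: matrix_mul_assoc)
  also have "\<dots> = ?T" by (simp add: minv[OF inv])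
  finally have "det (?X ** ?L ** ?X) = det ?T" by simp
  then show ?thesis by (simp add: det_mul power2_eq_square mult_ac)
qed

lemma det_inv_sum:
  fixes A B :: "real^'n::finite^'n"
  assumes "invertible A" "invertible B"
  shows "det (matrix_inv B + matrix_inv A) = det (A + B) / (det A * det B)"
proof -
  have "matrix_inv B + matrix_inv A = matrix_inv A ** (A + B) ** matrix_inv B"
    by (simp add: matrix_add_ldistrib matrix_add_rdistrib' minv[OF assms(1)] minv[OF assms(2)] matrix_mul_assoc[symmetric])
  then show ?thesis by (simp add: det_mul det_minv assms)
qed

lemma row_prod:
  fixes x :: "nat \<Rightarrow> nat \<Rightarrow> real^'n::finite^'n"
  assumes pd: "\<And>i j. 1 \<le> j \<Longrightarrow> j \<le> i \<Longrightarrow> i \<le> N \<Longrightarrow> posdef (x i j)"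
    and cp: "critical_point N x"
    and i: "1 \<le> i" "i \<le> N - 1"
  shows "(\<Prod>j=1..i. det (x i j))^2 = (\<Prod>j=1..i+1. det (x (i+1) j)) * (\<Prod>j=1..i-1. det (x (i-1) j))"
proof -
  have dpos: "\<And>i j. 1 \<le> j \<Longrightarrow> j \<le> i \<Longrightarrow> i \<le> N \<Longrightarrow> det (x i j) > 0"
    using pd posdef_det_pos by blast
  have pinv: "\<And>i j. 1 \<le> j \<Longrightarrow> j \<le> i \<Longrightarrow> i \<le> N \<Longrightarrow> invertible (x i j)"
    using pd posdef_invertible by blast
  define t where "t j = det (x (i+1) (j+1) + (if j \<le> i - 1 then x (i-1) j else 0))" for j
  have claim: "(\<Prod>j=1..k. det (x i j) ^ 2) = t k * (\<Prod>j=1..k. det (x (i+1) j)) * (\<Prod>j=1..k-1. det (x (i-1) j))"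
    if "1 \<le> k" "k \<le> i" for k
    using that
  proof (induction k rule: nat_induct_at_least)
    case base
    have r: "det (x i 1)^2 * det ((if 2 \<le> (1::nat) then matrix_inv (x (i-1) (1-1)) else 0) + matrix_inv (x (i+1) 1))
       = det (x (i+1) (1+1) + (if 1 \<le> i - 1 then x (i-1) 1 else 0))"
    proof -
      have h: "(1::nat) \<le> 1" "1 \<le> i" "i \<le> N - 1" using i by auto
      show ?thesis using row_det[OF pd cp h] by simp
    qed
    have a: "det (x (i+1) 1) > 0" using dpos i by auto
    have "det (x i 1)^2 = t 1 * det (x (i+1) 1)"
      using r a pinv[of 1 "i+1"] i by (simp add: t_def det_minv field_simps)
    then show ?case by simp
  next
    case (Suc k)
    have k: "1 \<le> k" "Suc k \<le> i" using Suc by auto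
    have r: "det (x i (Suc k))^2 * det ((if 2 \<le> Suc k then matrix_inv (x (i-1) (Suc k-1)) else 0) + matrix_inv (x (i+1) (Suc k)))
       = det (x (i+1) (Suc k+1) + (if Suc k \<le> i - 1 then x (i-1) (Suc k) else 0))"
    proof -
      have h: "(1::nat) \<le> Suc k" "Suc k \<le> i" "i \<le> N - 1" using i k by auto
      show ?thesis using row_det[OF pd cp h] by simp
    qed
    have iA: "invertible (x (i+1) (Suc k))" using pinv k i by auto
    have iB: "invertible (x (i-1) k)" using pinv k i by auto
    have aA: "det (x (i+1) (Suc k)) > 0" using dpos k i by auto
    have aB: "det (x (i-1) k) > 0" using dpos k i by auto
    have "det (x i (Suc k))^2 * (det (x (i+1) (Suc k) + x (i-1) k) / (det (x (i+1) (Suc k)) * det (x (i-1) k))) = t (Suc k)"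
      using r k det_inv_sum[OF iA iB] by (simp add: t_def)
    moreover have "t k = det (x (i+1) (Suc k) + x (i-1) k)"
    proof -
      have "k \<le> i - 1" using k by simp
      then show ?thesis by (simp add: t_def)
    qed
    ultimately have e: "t k * det (x i (Suc k))^2 = t (Suc k) * det (x (i+1) (Suc k)) * det (x (i-1) k)"
      using aA aB by (simp add: field_simps)
    have "(\<Prod>j=1..Suc k. det (x i j) ^ 2) = (\<Prod>j=1..k. det (x i j) ^ 2) * det (x i (Suc k)) ^ 2" by simp
    also have "\<dots> = t k * det (x i (Suc k))^2 * (\<Prod>j=1..k. det (x (i+1) j)) * (\<Prod>j=1..k-1. det (x (i-1) j))"
      using Suc k by simp
    also have "\<dots> = t (Suc k) * (\<Prod>j=1..Suc k. det (x (i+1) j)) * (\<Prod>j=1..Suc k-1. det (x (i-1) j))"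
    proof -
      have "(\<Prod>j=1..Suc k-1. det (x (i-1) j)) = (\<Prod>j=1..k-1. det (x (i-1) j)) * det (x (i-1) k)"
        using k by (cases k) auto
      then show ?thesis unfolding e by simp
    qed
    finally show ?case .
  qed
  have ti: "t i = det (x (i+1) (i+1))"
  proof -
    have "\<not> i \<le> i - 1" using i by simp
    then show ?thesis by (simp add: t_def)
  qed
  have "(\<Prod>j=1..i. det (x i j))^2 = (\<Prod>j=1..i. det (x i j) ^ 2)" by (simp add: prod_power_distrib)
  also have "\<dots> = t i * (\<Prod>j=1..i. det (x (i+1) j)) * (\<Prod>j=1..i-1. det (x (i-1) j))"
    using claim i by simp
  also have "\<dots> = (\<Prod>j=1..i+1. det (x (i+1) j)) * (\<Prod>j=1..i-1. det (x (i-1) j))"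
    unfolding ti by simp
  finally show ?thesis .
qed

lemma pow_root: "(c::real) > 0 \<Longrightarrow> (i::nat) \<ge> 1 \<Longrightarrow> (c ^ i) powr (1 / real i) = c"
  by (simp add: powr_realpow[symmetric] powr_powr)

theorem mainTheorem9:
  fixes N :: nat and z :: "nat \<Rightarrow> real^'d::finite^'d" and x :: "nat \<Rightarrow> nat \<Rightarrow> real^'d^'d"
  assumes "N \<ge> 2"
    and "\<forall>j. 1 \<le> j \<and> j \<le> N \<longrightarrow> posdef (z j)"
    and "array_with_row N z x"
    and "critical_point N x"
  shows "\<forall>i. 1 \<le> i \<and> i \<le> N \<longrightarrow>
           det (mprod (x i) i) powr (1 / real i) = det (mprod z N) powr (1 / real N)"
proof -
  have pd: "\<And>i j. 1 \<le> j \<Longrightarrow> j \<le> i \<Longrightarrow> i \<le> N \<Longrightarrow> posdef (x i j)"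
    using assms(3) unfolding array_with_row_def by blast
  have zx: "\<And>j. 1 \<le> j \<Longrightarrow> j \<le> N \<Longrightarrow> x N j = z j"
    using assms(3) unfolding array_with_row_def by blast
  define q where "q r = (\<Prod>j=1..r. det (x r j))" for r
  have qpos: "q r > 0" if "r \<le> N" for r
    unfolding q_def using that pd posdef_det_pos by (intro prod_pos) auto
  have rec: "q i ^ 2 = q (i+1) * q (i-1)" if "1 \<le> i" "i \<le> N - 1" for i
    unfolding q_def using row_prod[OF pd assms(4) that] .
  have pw: "r \<le> N \<Longrightarrow> q r = q 1 ^ r" for r
  proof (induction r rule: less_induct)
    case (less r)
    show ?case
    proof (cases r)
      case 0 then show ?thesis by (simp add: q_def)
    next
      case (Suc m)
      show ?thesis
      proof (cases m)
        case 0 then show ?thesis using Suc by simp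
      next
        case (Suc m')
        have r: "r = Suc (Suc m')" using Suc \<open>r = Suc m\<close> by simp
        have h1: "q (Suc m') = q 1 ^ Suc m'" using less.IH[of "Suc m'"] less.prems r by linarith
        have h2: "q m' = q 1 ^ m'" using less.IH[of m'] less.prems r by linarith
        have e: "q (Suc m') ^ 2 = q (Suc m' + 1) * q (Suc m' - 1)"
          using rec[of "Suc m'"] less.prems r by simp
        have p: "q 1 ^ m' > 0" using qpos[of 1] less.prems r by simp
        have "q 1 ^ m' * q (Suc (Suc m')) = q 1 ^ m' * q 1 ^ Suc (Suc m')"
          using e h1 h2 by (simp add: power_mult_distrib power_add[symmetric] mult_ac power2_eq_square)
        then show ?thesis using p r qpos[of 1] less.prems by simp
      qed
    qed
  qed
  have q1: "q 1 > 0" using qpos assms(1) by simp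
  have zN: "det (mprod z N) = q N"
    unfolding det_mprod q_def using zx by (intro prod.cong) auto
  show ?thesis
  proof (intro allI impI)
    fix i assume i: "1 \<le> i \<and> i \<le> N"
    have "det (mprod (x i) i) = q 1 ^ i" unfolding det_mprod using pw[of i] i by (simp add: q_def)
    moreover have "det (mprod z N) = q 1 ^ N" using zN pw[of N] by simp
    ultimately show "det (mprod (x i) i) powr (1 / real i) = det (mprod z N) powr (1 / real N)"
      using pow_root[OF q1] i assms(1) by simp
  qed
qed


end
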